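(* Assume $|\Theta|>1$ and let $D^{ST}$ be any constant with $d^{\mathcal T}(\theta,\theta^{\mathcal T}_* )\le d^{\mathcal S}(\theta,\theta^{\mathcal S}_* )+D^{ST}$ for all $\theta\in\Theta$. With $\hat\theta\in\arg\min_{\theta}\min_M\widehat{\mathcal R}^{\mathcal S}_{\theta,M}$ and $\Delta\mathcal R^{\mathcal S\to\mathcal T}=\mathcal R^{\mathcal T}_{\hat\theta,\widehat M^{\mathcal T}_{\hat\theta}}-\min_\theta\mathcal R^{\mathcal T}_\theta$, for every realization of the data sets, $$\Delta\mathcal R^{\mathcal S\to\mathcal T}\le2\mathcal G^{\mathcal T}_{\hat\theta}(\mathcal D^{\mathcal T})+d^{\mathcal S}(\hat\theta,\theta^{\mathcal S}_* )+D^{ST}\le2\mathcal G^{\mathcal T}_{\hat\theta}(\mathcal D^{\mathcal T})+\sup_{\theta\in\Theta}\mathcal G^{\mathcal S}_\theta(\mathcal D^{\mathcal S})+\mathcal G^{\mathcal S}_{\theta^{\mathcal S}_*}(\mathcal D^{\mathcal S})+D^{ST}.$$ If instead $\Theta=\{\theta\}$ is a singleton, then $\Delta\mathcal R^{\mathcal S\to\mathcal T}\le2\mathcal G^{\mathcal T}_\theta(\mathcal D^{\mathcal T})$.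
   Context: $\mathcal X$ finite, labels $c\in\{0,1\}$, $\Theta$ arbitrary, $\rho_\theta(x)$ density matrices on $\mathbb C^n$, $\mathcal M$ the binary POVMs $M=(M_0,M_1)$, $M_c\succeq0$, $M_0+M_1=I$; loss $\ell_{\theta,M}(c,x)=1-\mathrm{Tr}(M_c\rho_\theta(x))$. For task $\mathcal A\in\{\mathcal S,\mathcal T\}$ with distribution $p^{\mathcal A}(c,x)$ and finite data set $\mathcal D^{\mathcal A}$ of $N^{\mathcal A}$ samples: $\mathcal R^{\mathcal A}_{\theta,M}=\mathbb E_{p^{\mathcal A}}[\ell_{\theta,M}]$, $\mathcal R^{\mathcal A}_\theta=\min_M\mathcal R^{\mathcal A}_{\theta,M}$, $\widehat{\mathcal R}^{\mathcal A}_{\theta,M}=\frac1{N^{\mathcal A}}\sum_{(c,x)\in\mathcal D^{\mathcal A}}\ell_{\theta,M}(c,x)$, $\widehat M^{\mathcal A}_\theta\in\arg\min_M\widehat{\mathcal R}^{\mathcal A}_{\theta,M}$, $\theta^{\mathcal A}_*\in\arg\min_\theta\mathcal R^{\mathcal A}_\theta$ (minimizers assumed to exist). Task distance $d^{\mathcal A}(\theta,\theta')=|\mathcal R^{\mathcal A}_{\theta'}-\mathcal R^{\mathcal A}_\theta|$. Generalization error $\mathcal G^{\mathcal A}_\theta(\mathcal D^{\mathcal A})=\sup_{M\in\mathcal M}|\mathcal R^{\mathcal A}_{\theta,M}-\widehat{\mathcal R}^{\mathcal A}_{\theta,M}|$. *)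

theory Defs
  imports "HOL-Analysis.Analysis" "HOL-Probability.Probability_Mass_Function"
begin

text \<open>Complex n x n matrices are represented as complex^'n^'n for a finite index type 'n.
  Labels c in {0,1} are represented by bool (False = 0, True = 1).\<close>

definition hermitian :: "complex^'n^'n \<Rightarrow> bool" where
  "hermitian A \<longleftrightarrow> (\<forall>i j. A$i$j = cnj (A$j$i))"

definition psd :: "complex^'n^'n \<Rightarrow> bool" where
  "psd A \<longleftrightarrow> hermitian A \<and>
     (\<forall>v::complex^'n. 0 \<le> Re (\<Sum>i\<in>UNIV. cnj (v$i) * (A *v v)$i))"

definition density :: "complex^'n^'n \<Rightarrow> bool" where
  "density A \<longleftrightarrow> psd A \<and> trace A = 1"

definition POVMs :: "(bool \<Rightarrow> complex^'n^'n) set" where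
  "POVMs = {M. psd (M False) \<and> psd (M True) \<and> M False + M True = mat 1}"

text \<open>loss l_{theta,M}(c,x) = 1 - Tr(M_c rho_theta(x)) (the trace is real here).\<close>
definition loss :: "('p \<Rightarrow> 'x \<Rightarrow> complex^'n^'n) \<Rightarrow> 'p \<Rightarrow> (bool \<Rightarrow> complex^'n^'n)
                     \<Rightarrow> bool \<times> 'x \<Rightarrow> real" where
  "loss \<rho> \<theta> M z = 1 - Re (trace (M (fst z) ** \<rho> \<theta> (snd z)))"

definition risk :: "(bool \<times> 'x::finite) pmf \<Rightarrow> ('p \<Rightarrow> 'x \<Rightarrow> complex^'n^'n) \<Rightarrow> 'p
                     \<Rightarrow> (bool \<Rightarrow> complex^'n^'n) \<Rightarrow> real" where
  "risk p \<rho> \<theta> M = (\<Sum>z\<in>UNIV. pmf p z * loss \<rho> \<theta> M z)"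

definition risk_opt :: "(bool \<times> 'x::finite) pmf \<Rightarrow> ('p \<Rightarrow> 'x \<Rightarrow> complex^'n^'n) \<Rightarrow> 'p \<Rightarrow> real" where
  "risk_opt p \<rho> \<theta> = (INF M\<in>POVMs. risk p \<rho> \<theta> M)"

definition emp_risk :: "(bool \<times> 'x) list \<Rightarrow> ('p \<Rightarrow> 'x \<Rightarrow> complex^'n^'n) \<Rightarrow> 'p
                         \<Rightarrow> (bool \<Rightarrow> complex^'n^'n) \<Rightarrow> real" where
  "emp_risk D \<rho> \<theta> M = (\<Sum>z\<leftarrow>D. loss \<rho> \<theta> M z) / real (length D)"

definition task_dist :: "(bool \<times> 'x::finite) pmf \<Rightarrow> ('p \<Rightarrow> 'x \<Rightarrow> complex^'n^'n) \<Rightarrow> 'p \<Rightarrow> 'p \<Rightarrow> real" where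
  "task_dist p \<rho> \<theta> \<theta>' = \<bar>risk_opt p \<rho> \<theta>' - risk_opt p \<rho> \<theta>\<bar>"

definition gen_err :: "(bool \<times> 'x::finite) pmf \<Rightarrow> (bool \<times> 'x) list \<Rightarrow> ('p \<Rightarrow> 'x \<Rightarrow> complex^'n^'n)
                        \<Rightarrow> 'p \<Rightarrow> real" where
  "gen_err p D \<rho> \<theta> = (SUP M\<in>POVMs. \<bar>risk p \<rho> \<theta> M - emp_risk D \<rho> \<theta> M\<bar>)"

end

theory Submission
  imports Defs
begin

lemma mv_axis:
  fixes A :: "complex^'n^'n"
  shows "(A *v axis j c)$k = A$k$j * c"
proof -
  have "(A *v axis j c)$k = (\<Sum>l\<in>UNIV. A$k$l * (if l = j then c else 0))"
    by (simp add: matrix_vector_mult_def axis_def)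
  also have "\<dots> = (\<Sum>l\<in>UNIV. if l = j then A$k$l * c else 0)" by (rule sum.cong) auto
  finally show ?thesis by simp
qed

lemma sum_cnj_axis:
  fixes w :: "complex^'n"
  shows "(\<Sum>k\<in>UNIV. cnj ((axis i c :: complex^'n)$k) * f k) = cnj c * f i"
proof -
  have "(\<Sum>k\<in>UNIV. cnj ((axis i c :: complex^'n)$k) * f k) = (\<Sum>k\<in>UNIV. if k = i then cnj c * f k else 0)"
    by (rule sum.cong) (auto simp: axis_def)
  then show ?thesis by simp
qed

lemma quad_axis2:
  fixes A :: "complex^'n^'n"
  assumes "i \<noteq> j"
  shows "(\<Sum>k\<in>UNIV. cnj (((axis i 1 + axis j z)::complex^'n)$k) * (A *v (axis i 1 + axis j z))$k)
     = A$i$i + A$i$j * z + cnj z * A$j$i + cnj z * z * A$j$j"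
proof -
  have mv: "(A *v (axis i 1 + axis j z))$k = A$k$i + A$k$j * z" for k
    by (simp add: matrix_vector_right_distrib mv_axis)
  have "(\<Sum>k\<in>UNIV. cnj (((axis i 1 + axis j z)::complex^'n)$k) * (A *v (axis i 1 + axis j z))$k)
    = (\<Sum>k\<in>UNIV. cnj ((axis i 1 :: complex^'n)$k) * (A$k$i + A$k$j * z))
    + (\<Sum>k\<in>UNIV. cnj ((axis j z :: complex^'n)$k) * (A$k$i + A$k$j * z))"
    by (simp add: mv distrib_right sum.distrib)
  also have "\<dots> = A$i$i + A$i$j * z + cnj z * A$j$i + cnj z * z * A$j$j"
    unfolding sum_cnj_axis by (simp add: algebra_simps)
  finally show ?thesis .
qed

lemma psd_diag:
  fixes A :: "complex^'n^'n"
  assumes "psd A" shows "0 \<le> Re (A$i$i)" "Im (A$i$i) = 0"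
proof -
  have mv: "(A *v axis i 1)$k = A$k$i" for k
    by (simp add: mv_axis)
  have "0 \<le> Re (\<Sum>k\<in>UNIV. cnj ((axis i 1 :: complex^'n)$k) * (A *v axis i 1)$k)"
    using assms unfolding psd_def by blast
  also have "(\<Sum>k\<in>UNIV. cnj ((axis i 1 :: complex^'n)$k) * (A *v axis i 1)$k) = A$i$i"
    unfolding sum_cnj_axis by (simp add: mv)
  finally show "0 \<le> Re (A$i$i)" .
  have "A$i$i = cnj (A$i$i)" using assms unfolding psd_def hermitian_def by blast
  then show "Im (A$i$i) = 0" by (metis cnj.sel(2) equal_neg_zero)
qed

lemma psd_off:
  fixes A :: "complex^'n^'n"
  assumes "psd A" "i \<noteq> j"
  shows "2 * cmod (A$i$j) \<le> Re (A$i$i) + Re (A$j$j)"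
proof (cases "A$i$j = 0")
  case True then show ?thesis using psd_diag[OF assms(1)] by (simp add: add_nonneg_nonneg)
next
  case False
  define a where "a = A$i$j"
  define z where "z = - cnj a / complex_of_real (cmod a)"
  have "\<forall>i j. A$i$j = cnj (A$j$i)" using assms(1) unfolding psd_def hermitian_def by blast
  then have herm: "A$j$i = cnj a" unfolding a_def by blast
  have na: "cmod a > 0" using False a_def by simp
  have nz: "cmod z = 1" using na by (simp add: z_def norm_divide)
  have zz: "cnj z * z = 1"
  proof -
    have "cnj z * z = complex_of_real ((cmod z)^2)" by (simp only: complex_norm_square mult.commute)
    then show ?thesis using nz by simp
  qed
  have az: "a * z = - complex_of_real (cmod a)"
  proof -
    have "a * z = - (a * cnj a) / complex_of_real (cmod a)" by (simp add: z_def)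
    also have "\<dots> = - complex_of_real ((cmod a)^2) / complex_of_real (cmod a)" by (simp only: complex_norm_square)
    also have "\<dots> = - complex_of_real (cmod a)" using na by (simp add: power2_eq_square)
    finally show ?thesis .
  qed
  have "0 \<le> Re (\<Sum>k\<in>UNIV. cnj (((axis i 1 + axis j z)::complex^'n)$k) * (A *v (axis i 1 + axis j z))$k)"
    using assms(1) unfolding psd_def by blast
  also have "\<dots> = Re (A$i$i + a * z + cnj (a*z) + A$j$j)"
    unfolding quad_axis2[OF assms(2)] herm zz using a_def by (simp add: mult.commute)
  also have "\<dots> = Re (A$i$i) + Re (A$j$j) - 2 * cmod a" using az by simp
  finally show ?thesis by (simp add: a_def)
qed

lemma psd_entry_le:
  fixes A :: "complex^'n^'n"
  assumes "psd A" "\<And>k. Re (A$k$k) \<le> 1"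
  shows "cmod (A$i$j) \<le> 1"
proof (cases "i = j")
  case True
  then show ?thesis using psd_diag[OF assms(1), of j] assms(2)[of j] by (simp add: cmod_eq_Re)
next
  case False
  show ?thesis using psd_off[OF assms(1) False] assms(2)[of i] assms(2)[of j] by linarith
qed

lemma povm_entry:
  assumes "M \<in> POVMs" shows "cmod (M c $ i $ j) \<le> 1"
proof -
  have p: "psd (M False)" "psd (M True)" and s: "M False + M True = mat 1"
    using assms unfolding POVMs_def by auto
  have d: "Re (M c $k$k) \<le> 1" for k
  proof -
    have "(M False + M True)$k$k = 1" using s by (simp add: mat_def)
    then have "M False $k$k + M True $k$k = 1" by simp
    then have "Re (M False $k$k + M True $k$k) = Re 1" by (rule arg_cong)
    then have "Re (M False $k$k) + Re (M True $k$k) = 1" by (simp only: plus_complex.sel one_complex.sel)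
    then show ?thesis using psd_diag(1)[OF p(1), of k] psd_diag(1)[OF p(2), of k]
      by (cases c) auto
  qed
  have "psd (M c)" using p by (cases c) auto
  then show ?thesis using psd_entry_le d by blast
qed

lemma density_entry:
  fixes A :: "complex^'n^'n"
  assumes "density A" shows "cmod (A $ i $ j) \<le> 1"
proof -
  have p: "psd A" and t: "trace A = 1" using assms unfolding density_def by auto
  have d: "Re (A$k$k) \<le> 1" for k
  proof -
    have "Re (A$k$k) \<le> (\<Sum>l\<in>UNIV. Re (A$l$l))"
      by (rule member_le_sum) (auto simp: psd_diag(1)[OF p])
    also have "\<dots> = Re (trace A)" by (simp add: trace_def)
    finally show ?thesis using t by simp
  qed
  show ?thesis using psd_entry_le[OF p d] .
qed

lemma trace_bound:
  fixes M R :: "complex^'n^'n"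
  assumes "\<And>i j. cmod (M$i$j) \<le> 1" "\<And>i j. cmod (R$i$j) \<le> 1"
  shows "cmod (trace (M ** R)) \<le> real (CARD('n))^2"
proof -
  have "trace (M ** R) = (\<Sum>i\<in>UNIV. \<Sum>k\<in>UNIV. M$i$k * R$k$i)"
    by (simp add: trace_def matrix_matrix_mult_def)
  also have "cmod \<dots> \<le> (\<Sum>i\<in>(UNIV::'n set). \<Sum>k\<in>(UNIV::'n set). 1)"
  proof -
    have "cmod (\<Sum>i\<in>UNIV. \<Sum>k\<in>UNIV. M$i$k * R$k$i) \<le> (\<Sum>i\<in>(UNIV::'n set). cmod (\<Sum>k\<in>UNIV. M$i$k * R$k$i))"
      by (rule norm_sum)
    also have "\<dots> \<le> (\<Sum>i\<in>(UNIV::'n set). \<Sum>k\<in>(UNIV::'n set). 1)"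
    proof (rule sum_mono)
      fix i
      have "cmod (\<Sum>k\<in>UNIV. M$i$k * R$k$i) \<le> (\<Sum>k\<in>(UNIV::'n set). cmod (M$i$k * R$k$i))"
        by (rule norm_sum)
      also have "\<dots> \<le> (\<Sum>k\<in>(UNIV::'n set). 1)"
        by (rule sum_mono) (simp add: norm_mult mult_le_one assms)
      finally show "cmod (\<Sum>k\<in>UNIV. M$i$k * R$k$i) \<le> (\<Sum>k\<in>(UNIV::'n set). 1)" .
    qed
    finally show ?thesis .
  qed
  finally show ?thesis by (simp add: power2_eq_square)
qed

lemma loss_bound:
  fixes \<rho> :: "'p \<Rightarrow> 'x \<Rightarrow> complex^'n::finite^'n"
  assumes "\<forall>x. density (\<rho> \<theta> x)" "M \<in> POVMs"
  shows "\<bar>loss \<rho> \<theta> M z\<bar> \<le> 1 + real (CARD('n))^2"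
proof -
  have "cmod (trace (M (fst z) ** \<rho> \<theta> (snd z))) \<le> real (CARD('n))^2"
    by (rule trace_bound) (auto intro: povm_entry[OF assms(2)] density_entry assms(1)[rule_format])
  then show ?thesis unfolding loss_def using abs_Re_le_cmod[of "trace (M (fst z) ** \<rho> \<theta> (snd z))"]
    by linarith
qed

lemma diff_bound2: "\<bar>a\<bar> \<le> K \<Longrightarrow> \<bar>b\<bar> \<le> K \<Longrightarrow> \<bar>a - b\<bar> \<le> 2 * (K::real)" by arith

lemma risk_bound:
  fixes \<rho> :: "'p \<Rightarrow> 'x::finite \<Rightarrow> complex^'n::finite^'n"
  assumes "\<forall>x. density (\<rho> \<theta> x)" "M \<in> POVMs"
  shows "\<bar>risk p \<rho> \<theta> M\<bar> \<le> 1 + real (CARD('n))^2"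
proof -
  have "\<bar>risk p \<rho> \<theta> M\<bar> \<le> (\<Sum>z\<in>UNIV. \<bar>pmf p z * loss \<rho> \<theta> M z\<bar>)"
    unfolding risk_def by (rule sum_abs)
  also have "\<dots> \<le> (\<Sum>z\<in>UNIV. pmf p z * (1 + real (CARD('n))^2))"
    by (rule sum_mono) (simp add: abs_mult mult_left_mono loss_bound[where \<rho>=\<rho> and \<theta>=\<theta>, OF assms])
  also have "\<dots> = (1 + real (CARD('n))^2)"
    by (simp add: sum_distrib_right[symmetric] sum_pmf_eq_1)
  finally show ?thesis .
qed

lemma sum_list_bound:
  assumes "\<And>z. \<bar>f z\<bar> \<le> (B::real)"
  shows "\<bar>(\<Sum>z\<leftarrow>D. f z)\<bar> \<le> real (length D) * B"
proof (induction D)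
  case Nil then show ?case by simp
next
  case (Cons a D)
  have "\<bar>(\<Sum>z\<leftarrow>a#D. f z)\<bar> \<le> \<bar>f a\<bar> + \<bar>(\<Sum>z\<leftarrow>D. f z)\<bar>" by simp
  also have "\<dots> \<le> B + real (length D) * B" using Cons assms[of a] by linarith
  finally show ?case by (simp add: algebra_simps)
qed

lemma emp_bound:
  fixes \<rho> :: "'p \<Rightarrow> 'x::finite \<Rightarrow> complex^'n::finite^'n"
  assumes "\<forall>x. density (\<rho> \<theta> x)" "M \<in> POVMs"
  shows "\<bar>emp_risk D \<rho> \<theta> M\<bar> \<le> 1 + real (CARD('n))^2"
proof (cases "D = []")
  case True then show ?thesis by (simp add: emp_risk_def add_nonneg_nonneg)
next
  case False
  then have L: "real (length D) > 0" by simp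
  have "\<bar>(\<Sum>z\<leftarrow>D. loss \<rho> \<theta> M z)\<bar> \<le> real (length D) * (1 + real (CARD('n))^2)"
    by (rule sum_list_bound) (rule loss_bound[where \<rho>=\<rho> and \<theta>=\<theta>, OF assms])
  then show ?thesis using L unfolding emp_risk_def by (simp add: divide_simps mult.commute)
qed

lemma psd_0: "psd (0::complex^'n^'n)"
  by (simp add: psd_def hermitian_def)

lemma psd_1: "psd (mat 1::complex^'n^'n)"
proof -
  have "hermitian (mat 1::complex^'n^'n)" by (simp add: hermitian_def mat_def)
  moreover have "0 \<le> Re (\<Sum>i\<in>UNIV. cnj (v$i) * (mat 1 *v v)$i)" for v :: "complex^'n"
  proof -
    have "Re (\<Sum>i\<in>UNIV. cnj (v$i) * (mat 1 *v v)$i) = (\<Sum>i\<in>UNIV. Re (cnj (v$i) * v$i))"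
      by (simp add: Re_sum)
    also have "\<dots> \<ge> 0" by (rule sum_nonneg) simp
    finally show ?thesis by simp
  qed
  ultimately show ?thesis by (simp add: psd_def)
qed

lemma POVMs_ne: "(POVMs :: (bool \<Rightarrow> complex^'n^'n) set) \<noteq> {}"
proof -
  have "(\<lambda>b. if b then 0 else mat 1) \<in> (POVMs :: (bool \<Rightarrow> complex^'n^'n) set)"
    by (simp add: POVMs_def psd_0 psd_1)
  then show ?thesis by blast
qed



lemma bdd_gen:
  fixes \<rho> :: "'p \<Rightarrow> 'x::finite \<Rightarrow> complex^'n::finite^'n" and \<theta> :: 'p
  assumes dens: "\<forall>x. density (\<rho> \<theta> x)"
  shows "bdd_above ((\<lambda>M. \<bar>risk p \<rho> \<theta> M - emp_risk D \<rho> \<theta> M\<bar>) ` POVMs)"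
proof -
  have "\<bar>risk p \<rho> \<theta> M - emp_risk D \<rho> \<theta> M\<bar> \<le> 2 * (1 + real (CARD('n))^2)" if "M \<in> POVMs" for M
    by (rule diff_bound2[OF risk_bound[where \<rho>=\<rho> and \<theta>=\<theta>, OF dens that] emp_bound[where \<rho>=\<rho> and \<theta>=\<theta>, OF dens that]])
  then show ?thesis by (rule bdd_aboveI2)
qed

lemma gen_upper:
  fixes \<rho> :: "'p \<Rightarrow> 'x::finite \<Rightarrow> complex^'n::finite^'n" and \<theta> :: 'p
  assumes dens: "\<forall>x. density (\<rho> \<theta> x)" and M: "M \<in> POVMs"
  shows "\<bar>risk p \<rho> \<theta> M - emp_risk D \<rho> \<theta> M\<bar> \<le> gen_err p D \<rho> \<theta>"
  unfolding gen_err_def by (rule cSUP_upper[OF M bdd_gen[where \<rho>=\<rho> and \<theta>=\<theta> and p=p and D=D, OF dens]])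

lemma gen_le:
  fixes \<rho> :: "'p \<Rightarrow> 'x::finite \<Rightarrow> complex^'n::finite^'n" and \<theta> :: 'p
  assumes dens: "\<forall>x. density (\<rho> \<theta> x)"
  shows "gen_err p D \<rho> \<theta> \<le> 2 * (1 + real (CARD('n))^2)"
  unfolding gen_err_def
proof (rule cSUP_least[OF POVMs_ne])
  fix M :: "bool \<Rightarrow> complex^'n^'n" assume M: "M \<in> POVMs"
  show "\<bar>risk p \<rho> \<theta> M - emp_risk D \<rho> \<theta> M\<bar> \<le> 2 * (1 + real (CARD('n))^2)"
    by (rule diff_bound2[OF risk_bound[where \<rho>=\<rho> and \<theta>=\<theta>, OF dens M] emp_bound[where \<rho>=\<rho> and \<theta>=\<theta>, OF dens M]])
qed

lemma bdd_risk:
  fixes \<rho> :: "'p \<Rightarrow> 'x::finite \<Rightarrow> complex^'n::finite^'n" and \<theta> :: 'p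
  assumes dens: "\<forall>x. density (\<rho> \<theta> x)"
  shows "bdd_below ((\<lambda>M. risk p \<rho> \<theta> M) ` POVMs)"
proof -
  have "- (1 + real (CARD('n))^2) \<le> risk p \<rho> \<theta> M" if "M \<in> POVMs" for M
    using risk_bound[where \<rho>=\<rho> and \<theta>=\<theta>, OF dens that, where p=p] by linarith
  then show ?thesis by (rule bdd_belowI2)
qed

lemma bdd_emp:
  fixes \<rho> :: "'p \<Rightarrow> 'x::finite \<Rightarrow> complex^'n::finite^'n" and \<theta> :: 'p
  assumes dens: "\<forall>x. density (\<rho> \<theta> x)"
  shows "bdd_below ((\<lambda>M. emp_risk D \<rho> \<theta> M) ` POVMs)"
proof -
  have "- (1 + real (CARD('n))^2) \<le> emp_risk D \<rho> \<theta> M" if "M \<in> POVMs" for M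
    using emp_bound[where \<rho>=\<rho> and \<theta>=\<theta>, OF dens that, where D=D] by linarith
  then show ?thesis by (rule bdd_belowI2)
qed

lemma ropt_le_emp:
  fixes \<rho> :: "'p \<Rightarrow> 'x::finite \<Rightarrow> complex^'n::finite^'n" and \<theta> :: 'p
  assumes dens: "\<forall>x. density (\<rho> \<theta> x)"
  shows "risk_opt p \<rho> \<theta> \<le> (INF M\<in>POVMs. emp_risk D \<rho> \<theta> M) + gen_err p D \<rho> \<theta>"
proof -
  have "risk_opt p \<rho> \<theta> - gen_err p D \<rho> \<theta> \<le> (INF M\<in>POVMs. emp_risk D \<rho> \<theta> M)"
  proof (rule cINF_greatest[OF POVMs_ne])
    fix M :: "bool \<Rightarrow> complex^'n^'n" assume M: "M \<in> POVMs"
    have "risk_opt p \<rho> \<theta> \<le> risk p \<rho> \<theta> M" unfolding risk_opt_def by (rule cINF_lower[OF bdd_risk[where \<rho>=\<rho> and \<theta>=\<theta>, OF dens] M])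
    then show "risk_opt p \<rho> \<theta> - gen_err p D \<rho> \<theta> \<le> emp_risk D \<rho> \<theta> M"
      using gen_upper[where \<rho>=\<rho> and \<theta>=\<theta>, OF dens M, where p=p and D=D] by linarith
  qed
  then show ?thesis by linarith
qed

lemma emp_le_ropt:
  fixes \<rho> :: "'p \<Rightarrow> 'x::finite \<Rightarrow> complex^'n::finite^'n" and \<theta> :: 'p
  assumes dens: "\<forall>x. density (\<rho> \<theta> x)"
  shows "(INF M\<in>POVMs. emp_risk D \<rho> \<theta> M) \<le> risk_opt p \<rho> \<theta> + gen_err p D \<rho> \<theta>"
proof -
  have "(INF M\<in>POVMs. emp_risk D \<rho> \<theta> M) - gen_err p D \<rho> \<theta> \<le> risk_opt p \<rho> \<theta>"
    unfolding risk_opt_def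
  proof (rule cINF_greatest[OF POVMs_ne])
    fix M :: "bool \<Rightarrow> complex^'n^'n" assume M: "M \<in> POVMs"
    have "(INF M\<in>POVMs. emp_risk D \<rho> \<theta> M) \<le> emp_risk D \<rho> \<theta> M" by (rule cINF_lower[OF bdd_emp[where \<rho>=\<rho> and \<theta>=\<theta>, OF dens] M])
    then show "(INF M\<in>POVMs. emp_risk D \<rho> \<theta> M) - gen_err p D \<rho> \<theta> \<le> risk p \<rho> \<theta> M"
      using gen_upper[where \<rho>=\<rho> and \<theta>=\<theta>, OF dens M, where p=p and D=D] by linarith
  qed
  then show ?thesis by linarith
qed

lemma erm_bound:
  fixes \<rho> :: "'p \<Rightarrow> 'x::finite \<Rightarrow> complex^'n::finite^'n" and \<theta> :: 'p
  assumes dens: "\<forall>x. density (\<rho> \<theta> x)"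
  and MH: "MH \<in> POVMs" "\<forall>M\<in>POVMs. emp_risk D \<rho> \<theta> MH \<le> emp_risk D \<rho> \<theta> M"
  shows "risk p \<rho> \<theta> MH \<le> risk_opt p \<rho> \<theta> + 2 * gen_err p D \<rho> \<theta>"
proof -
  have "risk p \<rho> \<theta> MH - 2 * gen_err p D \<rho> \<theta> \<le> risk_opt p \<rho> \<theta>"
    unfolding risk_opt_def
  proof (rule cINF_greatest[OF POVMs_ne])
    fix M :: "bool \<Rightarrow> complex^'n^'n" assume M: "M \<in> POVMs"
    show "risk p \<rho> \<theta> MH - 2 * gen_err p D \<rho> \<theta> \<le> risk p \<rho> \<theta> M"
      using gen_upper[where \<rho>=\<rho> and \<theta>=\<theta>, OF dens M, where p=p and D=D] gen_upper[where \<rho>=\<rho> and \<theta>=\<theta>, OF dens MH(1), where p=p and D=D] MH(2)[rule_format, OF M] by linarith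
  qed
  then show ?thesis by linarith
qed


theorem lemmaB1:
  fixes \<Theta> :: "'p set"
    and \<rho> :: "'p \<Rightarrow> 'x::finite \<Rightarrow> complex^'n::finite^'n"
    and pS pT :: "(bool \<times> 'x) pmf"
    and DS DT :: "(bool \<times> 'x) list"
    and thS thT th_hat :: 'p
    and MT_hat :: "bool \<Rightarrow> complex^'n^'n"
    and D_ST :: real
  assumes rho: "\<forall>\<theta>\<in>\<Theta>. \<forall>x. density (\<rho> \<theta> x)"
    and thS: "thS \<in> \<Theta>" "\<forall>\<theta>\<in>\<Theta>. risk_opt pS \<rho> thS \<le> risk_opt pS \<rho> \<theta>"
    and thT: "thT \<in> \<Theta>" "\<forall>\<theta>\<in>\<Theta>. risk_opt pT \<rho> thT \<le> risk_opt pT \<rho> \<theta>"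
    and th_hat: "th_hat \<in> \<Theta>"
      "\<forall>\<theta>\<in>\<Theta>. (INF M\<in>POVMs. emp_risk DS \<rho> th_hat M) \<le> (INF M\<in>POVMs. emp_risk DS \<rho> \<theta> M)"
    and MT_hat: "MT_hat \<in> POVMs" "\<forall>M\<in>POVMs. emp_risk DT \<rho> th_hat MT_hat \<le> emp_risk DT \<rho> th_hat M"
  shows
    "(((\<exists>a\<in>\<Theta>. \<exists>b\<in>\<Theta>. a \<noteq> b) \<and>
      (\<forall>\<theta>\<in>\<Theta>. task_dist pT \<rho> \<theta> thT \<le> task_dist pS \<rho> \<theta> thS + D_ST)) \<longrightarrow>
       risk pT \<rho> th_hat MT_hat - (INF \<theta>\<in>\<Theta>. risk_opt pT \<rho> \<theta>)
         \<le> 2 * gen_err pT DT \<rho> th_hat + task_dist pS \<rho> th_hat thS + D_ST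
     \<and> 2 * gen_err pT DT \<rho> th_hat + task_dist pS \<rho> th_hat thS + D_ST
         \<le> 2 * gen_err pT DT \<rho> th_hat + (SUP \<theta>\<in>\<Theta>. gen_err pS DS \<rho> \<theta>)
             + gen_err pS DS \<rho> thS + D_ST)
     \<and> (\<forall>\<theta>. \<Theta> = {\<theta>} \<longrightarrow>
       risk pT \<rho> th_hat MT_hat - (INF \<theta>'\<in>\<Theta>. risk_opt pT \<rho> \<theta>') \<le> 2 * gen_err pT DT \<rho> \<theta>)"
proof -
  have dh: "\<forall>x. density (\<rho> th_hat x)" using rho th_hat(1) by blast
  have dS: "\<forall>x. density (\<rho> thS x)" using rho thS(1) by blast
  have erm: "risk pT \<rho> th_hat MT_hat \<le> risk_opt pT \<rho> th_hat + 2 * gen_err pT DT \<rho> th_hat"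
    by (rule erm_bound[where \<rho>=\<rho> and \<theta>=th_hat, OF dh MT_hat])
  have inf: "(INF \<theta>\<in>\<Theta>. risk_opt pT \<rho> \<theta>) = risk_opt pT \<rho> thT"
    by (rule cInf_eq_minimum) (use thT in auto)
  have P1: "risk pT \<rho> th_hat MT_hat - (INF \<theta>\<in>\<Theta>. risk_opt pT \<rho> \<theta>)
         \<le> 2 * gen_err pT DT \<rho> th_hat + task_dist pS \<rho> th_hat thS + D_ST"
    if H: "\<forall>\<theta>\<in>\<Theta>. task_dist pT \<rho> \<theta> thT \<le> task_dist pS \<rho> \<theta> thS + D_ST"
  proof -
    have "risk_opt pT \<rho> th_hat - risk_opt pT \<rho> thT \<le> task_dist pT \<rho> th_hat thT"
      unfolding task_dist_def by linarith
    also have "\<dots> \<le> task_dist pS \<rho> th_hat thS + D_ST" using H th_hat(1) by blast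
    finally show ?thesis using erm inf by linarith
  qed
  have P2: "task_dist pS \<rho> th_hat thS \<le> (SUP \<theta>\<in>\<Theta>. gen_err pS DS \<rho> \<theta>) + gen_err pS DS \<rho> thS"
  proof -
    have a: "risk_opt pS \<rho> th_hat \<le> (INF M\<in>POVMs. emp_risk DS \<rho> th_hat M) + gen_err pS DS \<rho> th_hat"
      by (rule ropt_le_emp[where \<rho>=\<rho> and \<theta>=th_hat, OF dh])
    have b: "(INF M\<in>POVMs. emp_risk DS \<rho> th_hat M) \<le> (INF M\<in>POVMs. emp_risk DS \<rho> thS M)"
      using th_hat(2) thS(1) by blast
    have c: "(INF M\<in>POVMs. emp_risk DS \<rho> thS M) \<le> risk_opt pS \<rho> thS + gen_err pS DS \<rho> thS"
      by (rule emp_le_ropt[where \<rho>=\<rho> and \<theta>=thS, OF dS])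
    have d: "risk_opt pS \<rho> thS \<le> risk_opt pS \<rho> th_hat" using thS(2) th_hat(1) by blast
    have bdd: "bdd_above ((\<lambda>\<theta>. gen_err pS DS \<rho> \<theta>) ` \<Theta>)"
    proof -
      have "gen_err pS DS \<rho> \<theta> \<le> 2 * (1 + real (CARD('n))^2)" if "\<theta> \<in> \<Theta>" for \<theta>
        by (rule gen_le[where \<rho>=\<rho> and \<theta>=\<theta>]) (use rho that in blast)
      then show ?thesis by (rule bdd_aboveI2)
    qed
    have e: "gen_err pS DS \<rho> th_hat \<le> (SUP \<theta>\<in>\<Theta>. gen_err pS DS \<rho> \<theta>)"
      by (rule cSUP_upper[OF th_hat(1) bdd])
    show ?thesis unfolding task_dist_def using a b c d e by linarith
  qed
  have P3: "risk pT \<rho> th_hat MT_hat - (INF \<theta>'\<in>\<Theta>. risk_opt pT \<rho> \<theta>') \<le> 2 * gen_err pT DT \<rho> \<theta>"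
    if S: "\<Theta> = {\<theta>}" for \<theta>
  proof -
    have "th_hat = \<theta>" "thT = \<theta>" using S th_hat(1) thT(1) by auto
    then show ?thesis using erm inf by simp
  qed
  show ?thesis using P1 P2 P3 by auto
qed

end
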